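(* Let $\Delta$ be an irreducible reduced root system with set of positive roots $\Delta^+$, and let $\eta_1,\eta_2\in\Delta^+$. Partially order $\Delta^+$ by $\mu\preccurlyeq\nu$ iff $\nu-\mu$ is a non-negative integral linear combination of simple roots, and denote by $\eta_1\vee\eta_2$ the least upper bound of $\eta_1,\eta_2$ in $(\Delta^+,\preccurlyeq)$ (which always exists), and by $\eta_1\wedge\eta_2$ their greatest lower bound in $(\Delta^+,\preccurlyeq)$ when it exists. (i) If $\eta_1\vee\eta_2$ covers both $\eta_1$ and $\eta_2$, then either $\eta_1\vee\eta_2=\alpha+\beta=\eta_1+\eta_2$ for some simple roots $\alpha,\beta$ that are adjacent in the Dynkin diagram, or $\eta_1\wedge\eta_2$ exists and $\eta_1$ and $\eta_2$ both cover $\eta_1\wedge\eta_2$. (ii) If $\eta_1\wedge\eta_2$ exists and $\eta_1$ and $\eta_2$ both cover $\eta_1\wedge\eta_2$, then $\eta_1\vee\eta_2$ covers both $\eta_1$ and $\eta_2$.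
   Context: "$x$ covers $y$" means $y\prec x$ and there is no $z$ with $y\prec z\prec x$ in $(\Delta^+,\preccurlyeq)$. The greatest lower bound (meet) $\nu=\eta_1\wedge\eta_2$, if it exists, is a positive root with $\eta_1\succcurlyeq\nu$, $\eta_2\succcurlyeq\nu$, and such that $\eta_1\succcurlyeq\kappa$, $\eta_2\succcurlyeq\kappa$ imply $\nu\succcurlyeq\kappa$ for every $\kappa\in\Delta^+$. *)

theory Defs
  imports "HOL-Analysis.Analysis"
begin

definition root_refl :: "'a::euclidean_space \<Rightarrow> 'a \<Rightarrow> 'a" where
  "root_refl \<alpha> \<beta> = \<beta> - (2 * (\<beta> \<bullet> \<alpha>) / (\<alpha> \<bullet> \<alpha>)) *\<^sub>R \<alpha>"

definition root_system :: "'a::euclidean_space set \<Rightarrow> bool" where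
  "root_system R \<longleftrightarrow> finite R \<and> 0 \<notin> R \<and> span R = UNIV \<and>
     (\<forall>\<alpha>\<in>R. \<forall>\<beta>\<in>R. root_refl \<alpha> \<beta> \<in> R) \<and>
     (\<forall>\<alpha>\<in>R. \<forall>\<beta>\<in>R. 2 * (\<beta> \<bullet> \<alpha>) / (\<alpha> \<bullet> \<alpha>) \<in> \<int>)"

definition reduced_root_system :: "'a::euclidean_space set \<Rightarrow> bool" where
  "reduced_root_system R \<longleftrightarrow> (\<forall>\<alpha>\<in>R. \<forall>c::real. c *\<^sub>R \<alpha> \<in> R \<longrightarrow> c = 1 \<or> c = -1)"

definition irreducible_root_system :: "'a::euclidean_space set \<Rightarrow> bool" where
  "irreducible_root_system R \<longleftrightarrow> R \<noteq> {} \<and>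
     \<not> (\<exists>A B. A \<noteq> {} \<and> B \<noteq> {} \<and> A \<union> B = R \<and> A \<inter> B = {} \<and>
            (\<forall>a\<in>A. \<forall>b\<in>B. a \<bullet> b = 0))"

definition nonneg_int_comb :: "'a::euclidean_space set \<Rightarrow> 'a \<Rightarrow> bool" where
  "nonneg_int_comb S v \<longleftrightarrow> (\<exists>c::'a \<Rightarrow> real. (\<forall>\<alpha>\<in>S. c \<alpha> \<in> \<nat>) \<and> v = (\<Sum>\<alpha>\<in>S. c \<alpha> *\<^sub>R \<alpha>))"

definition root_base :: "'a::euclidean_space set \<Rightarrow> 'a set \<Rightarrow> bool" where
  "root_base R S \<longleftrightarrow> S \<subseteq> R \<and> independent S \<and> span S = span R \<and>
     (\<forall>\<beta>\<in>R. nonneg_int_comb S \<beta> \<or> nonneg_int_comb S (- \<beta>))"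

definition pos_roots :: "'a::euclidean_space set \<Rightarrow> 'a set \<Rightarrow> 'a set" where
  "pos_roots R S = {\<beta>\<in>R. nonneg_int_comb S \<beta>}"

definition root_le :: "'a::euclidean_space set \<Rightarrow> 'a \<Rightarrow> 'a \<Rightarrow> bool" where
  "root_le S \<mu> \<nu> \<longleftrightarrow> nonneg_int_comb S (\<nu> - \<mu>)"

definition root_less :: "'a::euclidean_space set \<Rightarrow> 'a \<Rightarrow> 'a \<Rightarrow> bool" where
  "root_less S \<mu> \<nu> \<longleftrightarrow> root_le S \<mu> \<nu> \<and> \<mu> \<noteq> \<nu>"

definition root_covers :: "'a::euclidean_space set \<Rightarrow> 'a set \<Rightarrow> 'a \<Rightarrow> 'a \<Rightarrow> bool" where
  "root_covers S P x y \<longleftrightarrow> x \<in> P \<and> y \<in> P \<and> root_less S y x \<and>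
     \<not> (\<exists>z\<in>P. root_less S y z \<and> root_less S z x)"

definition is_root_join :: "'a::euclidean_space set \<Rightarrow> 'a set \<Rightarrow> 'a \<Rightarrow> 'a \<Rightarrow> 'a \<Rightarrow> bool" where
  "is_root_join S P a b j \<longleftrightarrow> j \<in> P \<and> root_le S a j \<and> root_le S b j \<and>
     (\<forall>k\<in>P. root_le S a k \<and> root_le S b k \<longrightarrow> root_le S j k)"

definition is_root_meet :: "'a::euclidean_space set \<Rightarrow> 'a set \<Rightarrow> 'a \<Rightarrow> 'a \<Rightarrow> 'a \<Rightarrow> bool" where
  "is_root_meet S P a b m \<longleftrightarrow> m \<in> P \<and> root_le S m a \<and> root_le S m b \<and>
     (\<forall>k\<in>P. root_le S k a \<and> root_le S k b \<longrightarrow> root_le S k m)"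

definition dynkin_adjacent :: "'a::euclidean_space \<Rightarrow> 'a \<Rightarrow> bool" where
  "dynkin_adjacent \<alpha> \<beta> \<longleftrightarrow> \<alpha> \<noteq> \<beta> \<and> \<alpha> \<bullet> \<beta> \<noteq> 0"

end

theory Submission
  imports Defs
begin

definition lc :: "'a::euclidean_space set \<Rightarrow> ('a \<Rightarrow> nat) \<Rightarrow> 'a" where
  "lc S n = (\<Sum>\<gamma>\<in>S. real (n \<gamma>) *\<^sub>R \<gamma>)"

lemma nn_iff: "nonneg_int_comb S v \<longleftrightarrow> (\<exists>n. v = lc S n)"
proof
  assume "nonneg_int_comb S v"
  then obtain c where c: "\<forall>\<alpha>\<in>S. c \<alpha> \<in> \<nat>" "v = (\<Sum>\<alpha>\<in>S. c \<alpha> *\<^sub>R \<alpha>)"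
    unfolding nonneg_int_comb_def by blast
  have "\<forall>\<alpha>\<in>S. real (nat \<lfloor>c \<alpha>\<rfloor>) = c \<alpha>"
  proof
    fix \<alpha> assume "\<alpha>\<in>S"
    then obtain k where "c \<alpha> = of_nat k" using c(1) Nats_cases by metis
    then show "real (nat \<lfloor>c \<alpha>\<rfloor>) = c \<alpha>" by simp
  qed
  then have "v = lc S (\<lambda>\<alpha>. nat \<lfloor>c \<alpha>\<rfloor>)" unfolding lc_def c(2) by (intro sum.cong) auto
  then show "\<exists>n. v = lc S n" by blast
next
  assume "\<exists>n. v = lc S n"
  then obtain n where "v = lc S n" by blast
  then show "nonneg_int_comb S v" unfolding nonneg_int_comb_def lc_def
    by (intro exI[of _ "\<lambda>\<alpha>. real (n \<alpha>)"]) auto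
qed

lemma lc_add: "lc S n + lc S m = lc S (\<lambda>\<gamma>. n \<gamma> + m \<gamma>)"
  unfolding lc_def by (simp add: sum.distrib[symmetric] scaleR_add_left)

lemma lc_single:
  assumes "finite S" "\<alpha> \<in> S"
  shows "lc S (\<lambda>\<gamma>. if \<gamma> = \<alpha> then 1 else 0) = \<alpha>"
proof -
  have "lc S (\<lambda>\<gamma>. if \<gamma> = \<alpha> then 1 else 0) = (\<Sum>\<gamma>\<in>S. if \<gamma> = \<alpha> then \<gamma> else 0)"
    unfolding lc_def by (intro sum.cong) auto
  then show ?thesis using assms by simp
qed

lemma lc_zero: "(\<forall>\<gamma>\<in>S. n \<gamma> = 0) \<Longrightarrow> lc S n = 0"
  unfolding lc_def by simp

lemma lc_cong: "(\<forall>\<gamma>\<in>S. n \<gamma> = m \<gamma>) \<Longrightarrow> lc S n = lc S m"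
  unfolding lc_def by (intro sum.cong) auto

lemma lc_inj:
  assumes "finite S" "independent S" "lc S n = lc S m" "\<gamma> \<in> S"
  shows "n \<gamma> = m \<gamma>"
proof -
  have "(\<Sum>\<gamma>\<in>S. (real (n \<gamma>) - real (m \<gamma>)) *\<^sub>R \<gamma>) = 0"
    using assms(3) unfolding lc_def by (simp add: scaleR_diff_left sum_subtractf)
  from real_vector.independentD[OF assms(2) assms(1) order_refl this assms(4)]
  show ?thesis by simp
qed

locale rb =
  fixes R S :: "'a::euclidean_space set"
  assumes rs: "root_system R" and base: "root_base R S"
begin

abbreviation N where "N \<equiv> nonneg_int_comb S"

lemma finR: "finite R" using rs unfolding root_system_def by blast
lemma SR: "S \<subseteq> R" using base unfolding root_base_def by blast
lemma finS: "finite S" using finR SR finite_subset by blast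
lemma indS: "independent S" using base unfolding root_base_def by blast
lemma zR: "0 \<notin> R" using rs unfolding root_system_def by blast
lemma zS: "0 \<notin> S" using zR SR by blast
lemma reflR: "\<alpha>\<in>R \<Longrightarrow> \<beta>\<in>R \<Longrightarrow> root_refl \<alpha> \<beta> \<in> R" using rs unfolding root_system_def by blast
lemma cint: "\<alpha>\<in>R \<Longrightarrow> \<beta>\<in>R \<Longrightarrow> 2 * (\<beta> \<bullet> \<alpha>) / (\<alpha> \<bullet> \<alpha>) \<in> \<int>"
  using rs unfolding root_system_def by blast
lemma posneg: "\<beta> \<in> R \<Longrightarrow> N \<beta> \<or> N (-\<beta>)"
  using base unfolding root_base_def by blast

lemma negR: assumes "\<alpha>\<in>R" shows "-\<alpha> \<in> R"
proof -
  have "\<alpha> \<noteq> 0" using assms zR by blast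
  then have "\<alpha> \<bullet> \<alpha> \<noteq> 0" by simp
  then have "root_refl \<alpha> \<alpha> = -\<alpha>" unfolding root_refl_def by (simp add: algebra_simps scaleR_2)
  with reflR[OF assms assms] show ?thesis by simp
qed

lemma int_pos_cases: "(x::real) \<in> \<int> \<Longrightarrow> x > 0 \<Longrightarrow> x = 1 \<or> x \<ge> 2"
  by (elim Ints_cases) auto

lemma diff_root:
  assumes a: "\<alpha>\<in>R" and b: "\<beta>\<in>R" and p: "\<alpha> \<bullet> \<beta> > 0" and ne: "\<alpha> \<noteq> \<beta>"
  shows "\<alpha> - \<beta> \<in> R"
proof -
  have an: "\<alpha> \<bullet> \<alpha> > 0" using a zR by (metis inner_gt_zero_iff)
  have bn: "\<beta> \<bullet> \<beta> > 0" using b zR by (metis inner_gt_zero_iff)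
  have c1: "2 * (\<alpha> \<bullet> \<beta>) / (\<beta> \<bullet> \<beta>) \<in> \<int>" using cint[OF b a] .
  have c2: "2 * (\<beta> \<bullet> \<alpha>) / (\<alpha> \<bullet> \<alpha>) \<in> \<int>" using cint[OF a b] .
  have p1: "2 * (\<alpha> \<bullet> \<beta>) / (\<beta> \<bullet> \<beta>) > 0" using p bn by simp
  have p2: "2 * (\<beta> \<bullet> \<alpha>) / (\<alpha> \<bullet> \<alpha>) > 0" using p an by (simp add: inner_commute)
  show ?thesis
  proof (cases "2 * (\<alpha> \<bullet> \<beta>) / (\<beta> \<bullet> \<beta>) = 1")
    case True
    then have "root_refl \<beta> \<alpha> = \<alpha> - \<beta>" unfolding root_refl_def True by simp
    with reflR[OF b a] show ?thesis by simp
  next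
    case False
    then have g1: "2 * (\<alpha> \<bullet> \<beta>) / (\<beta> \<bullet> \<beta>) \<ge> 2" using int_pos_cases[OF c1 p1] False by blast
    then have g1': "\<alpha> \<bullet> \<beta> \<ge> \<beta> \<bullet> \<beta>" using bn by (simp add: field_simps)
    show ?thesis
    proof (cases "2 * (\<beta> \<bullet> \<alpha>) / (\<alpha> \<bullet> \<alpha>) = 1")
      case True
      then have "root_refl \<alpha> \<beta> = \<beta> - \<alpha>" unfolding root_refl_def True by simp
      with reflR[OF a b] have "\<beta> - \<alpha> \<in> R" by simp
      from negR[OF this] show ?thesis by simp
    next
      case False
      then have g2: "2 * (\<beta> \<bullet> \<alpha>) / (\<alpha> \<bullet> \<alpha>) \<ge> 2" using int_pos_cases[OF c2 p2] False by blast
      then have g2': "\<alpha> \<bullet> \<beta> \<ge> \<alpha> \<bullet> \<alpha>" using an by (simp add: field_simps inner_commute)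
      have "(\<alpha> - \<beta>) \<bullet> (\<alpha> - \<beta>) = \<alpha> \<bullet> \<alpha> - 2 * (\<alpha> \<bullet> \<beta>) + \<beta> \<bullet> \<beta>"
        by (simp add: inner_diff_left inner_diff_right inner_commute)
      also have "\<dots> \<le> 0" using g1' g2' by simp
      finally have "\<alpha> - \<beta> = 0" by (metis inner_gt_zero_iff not_less)
      with ne show ?thesis by simp
    qed
  qed
qed

lemma sum_root:
  assumes "\<alpha>\<in>R" "\<beta>\<in>R" "\<alpha> \<bullet> \<beta> < 0" "\<alpha> \<noteq> -\<beta>"
  shows "\<alpha> + \<beta> \<in> R"
  using diff_root[OF assms(1) negR[OF assms(2)]] assms(3,4) by simp

lemma N_add: "N x \<Longrightarrow> N y \<Longrightarrow> N (x + y)"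
  unfolding nn_iff using lc_add by metis

lemma N_0: "N 0"
  unfolding nn_iff using lc_zero[of S "\<lambda>_. 0"] by metis

lemma N_S: "\<alpha> \<in> S \<Longrightarrow> N \<alpha>"
  unfolding nn_iff using lc_single[OF finS] by metis

lemma e_eq: "\<gamma>\<in>S \<Longrightarrow> lc S n = lc S m \<Longrightarrow> n \<gamma> = m \<gamma>"
  using lc_inj[OF finS indS] by blast

lemma N_antisym: assumes "N x" "N (-x)" shows "x = 0"
proof -
  obtain n m where n: "x = lc S n" and m: "-x = lc S m" using assms unfolding nn_iff by blast
  have "lc S (\<lambda>\<gamma>. n \<gamma> + m \<gamma>) = lc S n + lc S m" by (rule lc_add[symmetric])
  also have "\<dots> = 0" by (simp add: n[symmetric] m[symmetric])
  also have "\<dots> = lc S (\<lambda>_. 0)" by (rule lc_zero[symmetric]) simp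
  finally have "lc S (\<lambda>\<gamma>. n \<gamma> + m \<gamma>) = lc S (\<lambda>_. 0)" .
  note H = this
  have "n \<gamma> + m \<gamma> = 0" if "\<gamma>\<in>S" for \<gamma> using e_eq[OF that H] by simp
  then have "\<forall>\<gamma>\<in>S. n \<gamma> = 0" by blast
  then have "lc S n = 0" by (intro lc_zero)
  then show ?thesis using n by simp
qed

lemma N_below_simple:
  assumes a: "\<alpha>\<in>S" and "N x" "N (\<alpha> - x)"
  shows "x = 0 \<or> x = \<alpha>"
proof -
  obtain n m where n: "x = lc S n" and m: "\<alpha> - x = lc S m" using assms unfolding nn_iff by blast
  have "lc S (\<lambda>\<gamma>. n \<gamma> + m \<gamma>) = lc S n + lc S m" by (rule lc_add[symmetric])
  also have "\<dots> = \<alpha>" by (simp add: n[symmetric] m[symmetric])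
  also have "\<dots> = lc S (\<lambda>\<gamma>. if \<gamma> = \<alpha> then 1 else 0)" by (rule lc_single[OF finS a, symmetric])
  finally have "lc S (\<lambda>\<gamma>. n \<gamma> + m \<gamma>) = lc S (\<lambda>\<gamma>. if \<gamma> = \<alpha> then 1 else 0)" .
  note H = this
  have "n \<gamma> + m \<gamma> = (if \<gamma> = \<alpha> then 1 else 0)" if "\<gamma>\<in>S" for \<gamma> using e_eq[OF that H] by simp
  then have e: "\<forall>\<gamma>\<in>S. n \<gamma> + m \<gamma> = (if \<gamma> = \<alpha> then 1 else 0)" by blast
  show ?thesis
  proof (cases "n \<alpha> = 0")
    case True
    have "n \<gamma> = 0" if "\<gamma>\<in>S" for \<gamma>
    proof (cases "\<gamma> = \<alpha>")
      case True
      then show ?thesis using \<open>n \<alpha> = 0\<close> by simp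
    next
      case False
      then show ?thesis using e that by auto
    qed
    then have "lc S n = 0" by (intro lc_zero) blast
    then show ?thesis using n by simp
  next
    case False
    then have "m \<alpha> = 0" using e a by fastforce
    have "m \<gamma> = 0" if "\<gamma>\<in>S" for \<gamma>
    proof (cases "\<gamma> = \<alpha>")
      case True
      then show ?thesis using \<open>m \<alpha> = 0\<close> by simp
    next
      case False
      then show ?thesis using e that by auto
    qed
    then have "lc S m = 0" by (intro lc_zero) blast
    then have "\<alpha> - x = 0" using m by simp
    then show ?thesis by simp
  qed
qed

lemma N_simple_diff:
  assumes a: "\<alpha>\<in>S" and b: "\<beta>\<in>S" and ne: "\<alpha> \<noteq> \<beta>"
  shows "\<not> N (\<beta> - \<alpha>)"
proof
  assume "N (\<beta> - \<alpha>)"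
  then obtain n where n: "\<beta> - \<alpha> = lc S n" unfolding nn_iff by blast
  have "lc S (\<lambda>\<gamma>. n \<gamma> + (if \<gamma> = \<alpha> then 1 else 0)) = lc S n + lc S (\<lambda>\<gamma>. if \<gamma> = \<alpha> then 1 else 0)"
    by (rule lc_add[symmetric])
  also have "\<dots> = \<beta>" by (simp add: n[symmetric] lc_single[OF finS a])
  also have "\<dots> = lc S (\<lambda>\<gamma>. if \<gamma> = \<beta> then 1 else 0)" by (rule lc_single[OF finS b, symmetric])
  finally have "lc S (\<lambda>\<gamma>. n \<gamma> + (if \<gamma> = \<alpha> then 1 else 0)) = lc S (\<lambda>\<gamma>. if \<gamma> = \<beta> then 1 else 0)" .
  from e_eq[OF a this] show False using ne by simp
qed

lemma simple_diff_notroot: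
  assumes "\<alpha>\<in>S" "\<beta>\<in>S" "\<alpha> \<noteq> \<beta>"
  shows "\<alpha> - \<beta> \<notin> R"
  using posneg[of "\<alpha> - \<beta>"] N_simple_diff[OF assms] N_simple_diff[OF assms(2,1)] assms(3) by auto

lemma simple_inner:
  assumes "\<alpha>\<in>S" "\<beta>\<in>S" "\<alpha> \<noteq> \<beta>"
  shows "\<alpha> \<bullet> \<beta> \<le> 0"
  using diff_root[of \<alpha> \<beta>] simple_diff_notroot[OF assms] assms SR by force

lemma N_meet:
  assumes a: "\<alpha>\<in>S" and b: "\<beta>\<in>S" and ne: "\<alpha> \<noteq> \<beta>" and "N (v + \<beta>)" "N (v + \<alpha>)"
  shows "N v"
proof -
  obtain n m where n: "v + \<beta> = lc S n" and m: "v + \<alpha> = lc S m" using assms unfolding nn_iff by blast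
  have "lc S (\<lambda>\<gamma>. n \<gamma> + (if \<gamma> = \<alpha> then 1 else 0)) = lc S n + lc S (\<lambda>\<gamma>. if \<gamma> = \<alpha> then 1 else 0)"
    by (rule lc_add[symmetric])
  also have "\<dots> = v + \<beta> + \<alpha>" by (simp add: n[symmetric] lc_single[OF finS a])
  also have "\<dots> = v + \<alpha> + \<beta>" by (simp add: algebra_simps)
  also have "\<dots> = lc S m + lc S (\<lambda>\<gamma>. if \<gamma> = \<beta> then 1 else 0)" by (simp add: m[symmetric] lc_single[OF finS b])
  also have "\<dots> = lc S (\<lambda>\<gamma>. m \<gamma> + (if \<gamma> = \<beta> then 1 else 0))" by (rule lc_add)
  finally have "lc S (\<lambda>\<gamma>. n \<gamma> + (if \<gamma> = \<alpha> then 1 else 0)) = lc S (\<lambda>\<gamma>. m \<gamma> + (if \<gamma> = \<beta> then 1 else 0))" .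
  from e_eq[OF b this] have nb: "n \<beta> = m \<beta> + 1" using ne by simp
  define n' where "n' = n(\<beta> := n \<beta> - 1)"
  have "lc S (\<lambda>\<gamma>. n' \<gamma> + (if \<gamma> = \<beta> then 1 else 0)) = lc S n"
    by (rule lc_cong) (use nb in \<open>auto simp: n'_def\<close>)
  then have "lc S n' + \<beta> = v + \<beta>" using n lc_add[of S n'] lc_single[OF finS b] by metis
  then have "v = lc S n'" by simp
  then show ?thesis unfolding nn_iff by blast
qed

lemma N_pos_dir:
  assumes "N v" "v \<noteq> 0"
  shows "\<exists>\<alpha>\<in>S. N (v - \<alpha>) \<and> v \<bullet> \<alpha> > 0"
proof -
  obtain n where n: "v = lc S n" using assms unfolding nn_iff by blast
  have "\<exists>\<alpha>\<in>S. n \<alpha> \<ge> 1 \<and> v \<bullet> \<alpha> > 0"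
  proof (rule ccontr)
    assume H: "\<not> ?thesis"
    have "v \<bullet> v = (\<Sum>\<gamma>\<in>S. real (n \<gamma>) * (v \<bullet> \<gamma>))"
      by (subst (2) n) (simp add: lc_def inner_sum_right)
    also have "\<dots> \<le> 0"
    proof (rule sum_nonpos)
      fix \<gamma> assume "\<gamma> \<in> S"
      then show "real (n \<gamma>) * (v \<bullet> \<gamma>) \<le> 0" using H
        by (cases "n \<gamma> = 0") (auto simp: mult_nonneg_nonpos)
    qed
    finally show False using assms(2) by (metis inner_gt_zero_iff not_less)
  qed
  then obtain \<alpha> where a: "\<alpha>\<in>S" "n \<alpha> \<ge> 1" "v \<bullet> \<alpha> > 0" by blast
  define n' where "n' = n(\<alpha> := n \<alpha> - 1)"
  have "lc S (\<lambda>\<gamma>. n' \<gamma> + (if \<gamma> = \<alpha> then 1 else 0)) = lc S n"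
    by (rule lc_cong) (use a in \<open>auto simp: n'_def\<close>)
  then have "lc S n' + \<alpha> = v" using n lc_add[of S n'] lc_single[OF finS a(1)] by metis
  then have "v - \<alpha> = lc S n'" by (simp add: algebra_simps)
  then show ?thesis using a unfolding nn_iff by blast
qed

abbreviation P where "P \<equiv> pos_roots R S"

lemma mem_P: "x \<in> P \<longleftrightarrow> x \<in> R \<and> N x" unfolding pos_roots_def by simp

lemma P_ne0: "x \<in> P \<Longrightarrow> x \<noteq> 0" using mem_P zR by blast

lemma le_iff: "root_le S x y \<longleftrightarrow> N (y - x)" unfolding root_le_def by simp

lemma D1:
  assumes mu: "\<mu>\<in>P" and nu: "\<nu>\<in>P" and d: "\<nu> - \<mu> \<in> S"
  shows "root_covers S P \<nu> \<mu>"
proof -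
  have ne: "\<mu> \<noteq> \<nu>" using d zS by auto
  have "\<not> (\<exists>z\<in>P. root_less S \<mu> z \<and> root_less S z \<nu>)"
  proof
    assume "\<exists>z\<in>P. root_less S \<mu> z \<and> root_less S z \<nu>"
    then obtain z where z: "N (z - \<mu>)" "N (\<nu> - z)" "z \<noteq> \<mu>" "z \<noteq> \<nu>"
      unfolding root_less_def le_iff by blast
    have "N ((\<nu> - \<mu>) - (z - \<mu>))" using z(2) by simp
    from N_below_simple[OF d z(1) this] z(3,4) show False by auto
  qed
  then show ?thesis unfolding root_covers_def root_less_def le_iff using mu nu ne d N_S by auto
qed

lemma D2:
  assumes c: "root_covers S P \<nu> \<mu>"
  shows "\<nu> - \<mu> \<in> S"
proof -
  have mu: "\<mu>\<in>P" and nu: "\<nu>\<in>P" and v: "N (\<nu> - \<mu>)" and ne: "\<mu> \<noteq> \<nu>"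
    and nz: "\<not> (\<exists>z\<in>P. root_less S \<mu> z \<and> root_less S z \<nu>)"
    using c unfolding root_covers_def root_less_def le_iff by auto
  obtain \<alpha> where a: "\<alpha>\<in>S" "N (\<nu> - \<mu> - \<alpha>)" "(\<nu> - \<mu>) \<bullet> \<alpha> > 0"
    using N_pos_dir[OF v] ne by auto
  have aR: "\<alpha> \<in> R" using a SR by blast
  have key: "z = \<mu> \<or> z = \<nu>" if "z \<in> P" "N (z - \<mu>)" "N (\<nu> - z)" for z
    using nz that unfolding root_less_def le_iff by blast
  have "\<nu> \<bullet> \<alpha> > 0 \<or> \<mu> \<bullet> \<alpha> < 0" using a(3) unfolding inner_diff_left by linarith
  then show ?thesis
  proof
    assume pa: "\<nu> \<bullet> \<alpha> > 0"
    show ?thesis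
    proof (cases "\<nu> = \<alpha>")
      case True
      have "N (\<alpha> - \<mu>)" using v True by simp
      from N_below_simple[OF a(1) _ this] mu ne True P_ne0 show ?thesis unfolding mem_P by auto
    next
      case False
      have zR': "\<nu> - \<alpha> \<in> R" using diff_root[OF _ aR pa False] nu mem_P by blast
      have z1: "N (\<nu> - \<alpha> - \<mu>)" using a(2) by (simp add: algebra_simps)
      have "N (\<mu> + (\<nu> - \<alpha> - \<mu>))" using N_add mu z1 mem_P by blast
      then have "\<nu> - \<alpha> \<in> P" using zR' mem_P by simp
      moreover have "N (\<nu> - (\<nu> - \<alpha>))" using a(1) N_S by simp
      ultimately have "\<nu> - \<alpha> = \<mu> \<or> \<nu> - \<alpha> = \<nu>" using key z1 by blast
      then show ?thesis using a(1) zS by (auto simp: algebra_simps)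
    qed
  next
    assume pa: "\<mu> \<bullet> \<alpha> < 0"
    have "\<mu> \<noteq> -\<alpha>"
    proof
      assume "\<mu> = -\<alpha>"
      then have "N (- \<alpha>)" using mu mem_P by simp
      then have "\<alpha> = 0" by (rule N_antisym[OF N_S[OF a(1)]])
      then show False using a(1) zS by simp
    qed
    then have zR': "\<mu> + \<alpha> \<in> R" using sum_root[OF _ aR pa] mu mem_P by blast
    have "N (\<mu> + \<alpha>)" using N_add mu N_S a(1) mem_P by blast
    then have "\<mu> + \<alpha> \<in> P" using zR' mem_P by simp
    moreover have "N (\<mu> + \<alpha> - \<mu>)" using a(1) N_S by simp
    moreover have "N (\<nu> - (\<mu> + \<alpha>))" using a(2) by (simp add: algebra_simps)
    ultimately have "\<mu> + \<alpha> = \<mu> \<or> \<mu> + \<alpha> = \<nu>" using key by blast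
    then show ?thesis using a(1) zS by (auto simp: algebra_simps)
  qed
qed

lemma partI_lem:
  assumes A5: "\<eta>1 \<in> P" and A6: "\<eta>2 \<in> P" and A7: "is_root_join S P \<eta>1 \<eta>2 j"
  shows "root_covers S P j \<eta>1 \<and> root_covers S P j \<eta>2 \<longrightarrow>
           (\<exists>\<alpha>\<in>S. \<exists>\<beta>\<in>S. dynkin_adjacent \<alpha> \<beta> \<and> j = \<alpha> + \<beta> \<and> j = \<eta>1 + \<eta>2) \<or>
           (\<exists>\<nu>. is_root_meet S P \<eta>1 \<eta>2 \<nu> \<and> root_covers S P \<eta>1 \<nu> \<and> root_covers S P \<eta>2 \<nu>)"
proof -
  have h1: "\<eta>1 \<in> R" "N \<eta>1" using A5 mem_P by auto
  have h2: "\<eta>2 \<in> R" "N \<eta>2" using A6 mem_P by auto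
  have n1: "\<eta>1 \<noteq> 0" using h1 zR by blast
  have n2: "\<eta>2 \<noteq> 0" using h2 zR by blast
  have j: "j \<in> P" "N (j - \<eta>1)" "N (j - \<eta>2)" "\<forall>k\<in>P. N (k - \<eta>1) \<and> N (k - \<eta>2) \<longrightarrow> N (k - j)"
    using A7 unfolding is_root_join_def le_iff by auto
  have jR: "j \<in> R" "N j" using j(1) mem_P by auto
  have jn: "j \<noteq> 0" using jR zR by blast
  show "root_covers S P j \<eta>1 \<and> root_covers S P j \<eta>2 \<longrightarrow>
           (\<exists>\<alpha>\<in>S. \<exists>\<beta>\<in>S. dynkin_adjacent \<alpha> \<beta> \<and> j = \<alpha> + \<beta> \<and> j = \<eta>1 + \<eta>2) \<or>
           (\<exists>\<nu>. is_root_meet S P \<eta>1 \<eta>2 \<nu> \<and> root_covers S P \<eta>1 \<nu> \<and> root_covers S P \<eta>2 \<nu>)"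
  proof
    assume c: "root_covers S P j \<eta>1 \<and> root_covers S P j \<eta>2"
    define \<alpha> where "\<alpha> = j - \<eta>1"
    define \<beta> where "\<beta> = j - \<eta>2"
    have a: "\<alpha> \<in> S" unfolding \<alpha>_def using D2 c by blast
    have b: "\<beta> \<in> S" unfolding \<beta>_def using D2 c by blast
    have aR: "\<alpha> \<in> R" and bR: "\<beta> \<in> R" using a b SR by auto
    have e1: "\<eta>1 = j - \<alpha>" and e2: "\<eta>2 = j - \<beta>" using \<alpha>_def \<beta>_def by auto
    have ne: "\<alpha> \<noteq> \<beta>"
    proof
      assume "\<alpha> = \<beta>"
      then have "\<eta>1 = \<eta>2" using e1 e2 by simp
      then have "N (\<eta>1 - j)" using j(4) A5 N_0 by simp
      then have "N (- (j - \<eta>1))" by simp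
      then have "j - \<eta>1 = 0" by (rule N_antisym[OF j(2)])
      then show False using a zS \<alpha>_def by simp
    qed
    have oab: "\<alpha> \<bullet> \<beta> \<le> 0" using simple_inner[OF a b ne] .
    show "(\<exists>\<alpha>\<in>S. \<exists>\<beta>\<in>S. dynkin_adjacent \<alpha> \<beta> \<and> j = \<alpha> + \<beta> \<and> j = \<eta>1 + \<eta>2) \<or>
           (\<exists>\<nu>. is_root_meet S P \<eta>1 \<eta>2 \<nu> \<and> root_covers S P \<eta>1 \<nu> \<and> root_covers S P \<eta>2 \<nu>)"
    proof (cases "\<eta>1 = \<beta>")
      case True
      then have e2': "\<eta>2 = \<alpha>" using e1 e2 by (simp add: algebra_simps)
      have jab: "j = \<alpha> + \<beta>" using e1 True by (simp add: algebra_simps)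
      have "\<alpha> \<bullet> \<beta> \<noteq> 0"
      proof
        assume o: "\<alpha> \<bullet> \<beta> = 0"
        have an: "\<alpha> \<bullet> \<alpha> \<noteq> 0" using a zS by auto
        have "j \<bullet> \<alpha> = \<alpha> \<bullet> \<alpha>" using jab o by (simp add: inner_add_left inner_add_right inner_commute)
        then have "root_refl \<alpha> j = j - 2 *\<^sub>R \<alpha>" unfolding root_refl_def using an by simp
        also have "\<dots> = \<beta> - \<alpha>" using jab by (simp add: algebra_simps scaleR_2)
        finally have "\<beta> - \<alpha> \<in> R" using reflR[OF aR jR(1)] by simp
        then show False using simple_diff_notroot[OF b a] ne by auto
      qed
      then have "dynkin_adjacent \<alpha> \<beta>" unfolding dynkin_adjacent_def using ne by simp
      moreover have "j = \<eta>1 + \<eta>2" using jab True e2' by (simp add: algebra_simps)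
      ultimately show ?thesis using a b jab by blast
    next
      case False
      define \<nu> where "\<nu> = \<eta>1 - \<beta>"
      have nu2: "\<nu> = \<eta>2 - \<alpha>" unfolding \<nu>_def e1 e2 by (simp add: algebra_simps)
      have ne12: "\<eta>1 \<noteq> \<eta>2" using e1 e2 ne by auto
      have o12: "\<eta>1 \<bullet> \<eta>2 \<le> 0"
      proof (rule ccontr)
        assume "\<not> ?thesis"
        then have "\<eta>1 - \<eta>2 \<in> R" using diff_root[OF h1(1) h2(1) _ ne12] by simp
        moreover have "\<eta>1 - \<eta>2 = \<beta> - \<alpha>" using e1 e2 by (simp add: algebra_simps)
        ultimately show False using simple_diff_notroot[OF b a] ne by auto
      qed
      have jj: "j \<bullet> j > 0" using jn by simp
      have "\<eta>1 \<bullet> \<beta> > 0 \<or> \<eta>2 \<bullet> \<alpha> > 0"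
      proof (rule ccontr)
        assume "\<not> ?thesis"
        then have x: "(j - \<alpha>) \<bullet> \<beta> \<le> 0" "(j - \<beta>) \<bullet> \<alpha> \<le> 0" using e1 e2 by auto
        have y: "(j - \<alpha>) \<bullet> (j - \<beta>) \<le> 0" using o12 e1 e2 by simp
        show False using x y jj oab
          by (simp add: inner_diff_left inner_diff_right inner_commute)
      qed
      then have nuR: "\<nu> \<in> R"
      proof
        assume "\<eta>1 \<bullet> \<beta> > 0"
        then show ?thesis using diff_root[OF h1(1) bR _ False] \<nu>_def by simp
      next
        assume p: "\<eta>2 \<bullet> \<alpha> > 0"
        have "\<eta>2 \<noteq> \<alpha>" using nu2 \<nu>_def False by auto
        then show ?thesis using diff_root[OF h2(1) aR p] nu2 by simp
      qed
      have nuN: "N \<nu>"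
      proof -
        { assume "N (- \<nu>)"
          then have "N (\<beta> - \<eta>1)" using \<nu>_def by simp
          from N_below_simple[OF b h1(2) this] have False using n1 False by auto }
        then show ?thesis using posneg[OF nuR] by blast
      qed
      have nuP: "\<nu> \<in> P" using nuR nuN mem_P by simp
      have "is_root_meet S P \<eta>1 \<eta>2 \<nu>"
        unfolding is_root_meet_def le_iff
      proof (intro conjI ballI impI)
        show "\<nu> \<in> P" by fact
        show "N (\<eta>1 - \<nu>)" using \<nu>_def N_S[OF b] by simp
        show "N (\<eta>2 - \<nu>)" using nu2 N_S[OF a] by simp
        fix k assume "k \<in> P" and kN: "N (\<eta>1 - k) \<and> N (\<eta>2 - k)"
        have q1: "(\<nu> - k) + \<beta> = \<eta>1 - k" unfolding \<nu>_def by simp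
        have q2: "(\<nu> - k) + \<alpha> = \<eta>2 - k" unfolding nu2 by simp
        have "N ((\<nu> - k) + \<beta>)" "N ((\<nu> - k) + \<alpha>)" unfolding q1 q2 using kN by blast+
        from N_meet[OF a b ne this(1) this(2)] show "N (\<nu> - k)" .
      qed
      moreover have "root_covers S P \<eta>1 \<nu>" using D1[OF nuP A5] \<nu>_def b by simp
      moreover have "root_covers S P \<eta>2 \<nu>" using D1[OF nuP A6] nu2 a by simp
      ultimately show ?thesis by blast
    qed
  qed
qed

lemma partII_lem:
  assumes A5: "\<eta>1 \<in> P" and A6: "\<eta>2 \<in> P" and A7: "is_root_join S P \<eta>1 \<eta>2 j"
  shows "(\<exists>\<nu>. is_root_meet S P \<eta>1 \<eta>2 \<nu> \<and> root_covers S P \<eta>1 \<nu> \<and> root_covers S P \<eta>2 \<nu>) \<longrightarrow>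
           root_covers S P j \<eta>1 \<and> root_covers S P j \<eta>2"
proof -
  have h1: "\<eta>1 \<in> R" "N \<eta>1" using A5 mem_P by auto
  have h2: "\<eta>2 \<in> R" "N \<eta>2" using A6 mem_P by auto
  have n1: "\<eta>1 \<noteq> 0" using h1 zR by blast
  have n2: "\<eta>2 \<noteq> 0" using h2 zR by blast
  have j: "j \<in> P" "N (j - \<eta>1)" "N (j - \<eta>2)" "\<forall>k\<in>P. N (k - \<eta>1) \<and> N (k - \<eta>2) \<longrightarrow> N (k - j)"
    using A7 unfolding is_root_join_def le_iff by auto
  have jR: "j \<in> R" "N j" using j(1) mem_P by auto
  have jn: "j \<noteq> 0" using jR zR by blast
  show "(\<exists>\<nu>. is_root_meet S P \<eta>1 \<eta>2 \<nu> \<and> root_covers S P \<eta>1 \<nu> \<and> root_covers S P \<eta>2 \<nu>) \<longrightarrow>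
           root_covers S P j \<eta>1 \<and> root_covers S P j \<eta>2"
  proof
    assume "\<exists>\<nu>. is_root_meet S P \<eta>1 \<eta>2 \<nu> \<and> root_covers S P \<eta>1 \<nu> \<and> root_covers S P \<eta>2 \<nu>"
    then obtain \<nu> where m: "is_root_meet S P \<eta>1 \<eta>2 \<nu>" and c1: "root_covers S P \<eta>1 \<nu>"
      and c2: "root_covers S P \<eta>2 \<nu>" by blast
    define \<alpha> where "\<alpha> = \<eta>1 - \<nu>"
    define \<beta> where "\<beta> = \<eta>2 - \<nu>"
    have a: "\<alpha> \<in> S" unfolding \<alpha>_def by (rule D2[OF c1])
    have b: "\<beta> \<in> S" unfolding \<beta>_def by (rule D2[OF c2])
    have aR: "\<alpha> \<in> R" and bR: "\<beta> \<in> R" using a b SR by auto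
    have e1: "\<eta>1 = \<nu> + \<alpha>" and e2: "\<eta>2 = \<nu> + \<beta>" unfolding \<alpha>_def \<beta>_def by simp_all
    have nuP: "\<nu> \<in> P" and mk: "\<forall>k\<in>P. N (\<eta>1 - k) \<and> N (\<eta>2 - k) \<longrightarrow> N (\<nu> - k)"
      using m unfolding is_root_meet_def le_iff by blast+
    have nuR: "\<nu> \<in> R" "N \<nu>" using nuP mem_P by auto
    have nun: "\<nu> \<noteq> 0" using nuR zR by blast
    have ne: "\<alpha> \<noteq> \<beta>"
    proof
      assume "\<alpha> = \<beta>"
      then have "\<eta>1 = \<eta>2" using e1 e2 by simp
      then have "N (\<nu> - \<eta>1)" using mk A5 N_0 by simp
      then have "N (- \<alpha>)" using e1 by simp
      then have "\<alpha> = 0" by (rule N_antisym[OF N_S[OF a]])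
      then show False using a zS by simp
    qed
    have ne12: "\<eta>1 \<noteq> \<eta>2" using e1 e2 ne by auto
    have oab: "\<alpha> \<bullet> \<beta> \<le> 0" using simple_inner[OF a b ne] .
    have o12: "\<eta>1 \<bullet> \<eta>2 \<le> 0"
    proof (rule ccontr)
      assume "\<not> ?thesis"
      then have "\<eta>1 - \<eta>2 \<in> R" using diff_root[OF h1(1) h2(1) _ ne12] by simp
      moreover have "\<eta>1 - \<eta>2 = \<alpha> - \<beta>" using e1 e2 by (simp add: algebra_simps)
      ultimately show False using simple_diff_notroot[OF a b] ne by auto
    qed
    have nn: "\<nu> \<bullet> \<nu> > 0" using nun by simp
    have "\<eta>1 \<bullet> \<beta> < 0 \<or> \<eta>2 \<bullet> \<alpha> < 0"
    proof (rule ccontr)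
      assume "\<not> ?thesis"
      then have x: "(\<nu> + \<alpha>) \<bullet> \<beta> \<ge> 0" "(\<nu> + \<beta>) \<bullet> \<alpha> \<ge> 0" using e1 e2 by auto
      have y: "(\<nu> + \<alpha>) \<bullet> (\<nu> + \<beta>) \<le> 0" using o12 e1 e2 by simp
      show False using x y nn oab
        by (simp add: inner_add_left inner_add_right inner_commute)
    qed
    then have mR: "\<nu> + \<alpha> + \<beta> \<in> R"
    proof
      assume p: "\<eta>1 \<bullet> \<beta> < 0"
      have "\<eta>1 \<noteq> - \<beta>"
      proof
        assume "\<eta>1 = - \<beta>"
        then have "N (- \<beta>)" using h1(2) by simp
        then have "\<beta> = 0" by (rule N_antisym[OF N_S[OF b]])
        then show False using b zS by simp
      qed
      then show ?thesis using sum_root[OF h1(1) bR p] e1 by simp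
    next
      assume p: "\<eta>2 \<bullet> \<alpha> < 0"
      have "\<eta>2 \<noteq> - \<alpha>"
      proof
        assume "\<eta>2 = - \<alpha>"
        then have "N (- \<alpha>)" using h2(2) by simp
        then have "\<alpha> = 0" by (rule N_antisym[OF N_S[OF a]])
        then show False using a zS by simp
      qed
      then show ?thesis using sum_root[OF h2(1) aR p] e2 by (simp add: algebra_simps)
    qed
    have mN: "N (\<nu> + \<alpha> + \<beta>)" using N_add nuR(2) N_S[OF a] N_S[OF b] by blast
    have mP: "\<nu> + \<alpha> + \<beta> \<in> P" using mR mN mem_P by simp
    have q1: "\<nu> + \<alpha> + \<beta> - \<eta>1 = \<beta>" using e1 by (simp add: algebra_simps)
    have q2: "\<nu> + \<alpha> + \<beta> - \<eta>2 = \<alpha>" using e2 by (simp add: algebra_simps)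
    have "N (\<nu> + \<alpha> + \<beta> - \<eta>1)" "N (\<nu> + \<alpha> + \<beta> - \<eta>2)"
      unfolding q1 q2 using N_S a b by auto
    then have m1: "N (\<nu> + \<alpha> + \<beta> - j)" using j(4) mP by blast
    have q3: "\<beta> - (j - \<eta>1) = \<nu> + \<alpha> + \<beta> - j" using e1 by (simp add: algebra_simps)
    have "N (\<beta> - (j - \<eta>1))" unfolding q3 by (rule m1)
    from N_below_simple[OF b j(2) this] have "j - \<eta>1 = 0 \<or> j - \<eta>1 = \<beta>" .
    moreover have "j \<noteq> \<eta>1"
    proof
      assume "j = \<eta>1"
      then have "N (\<eta>1 - \<eta>2)" using j(3) by simp
      moreover have "\<eta>1 - \<eta>2 = \<alpha> - \<beta>" using e1 e2 by (simp add: algebra_simps)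
      ultimately have "N (\<alpha> - \<beta>)" by simp
      then show False using N_simple_diff[OF b a] ne by blast
    qed
    ultimately have d1: "j - \<eta>1 = \<beta>" by auto
    then have jv: "j = \<nu> + \<alpha> + \<beta>" using e1 by (simp add: algebra_simps)
    have d2: "j - \<eta>2 = \<alpha>" using jv e2 by (simp add: algebra_simps)
    have "root_covers S P j \<eta>1" using D1[OF A5 j(1)] d1 b by simp
    moreover have "root_covers S P j \<eta>2" using D1[OF A6 j(1)] d2 a by simp
    ultimately show "root_covers S P j \<eta>1 \<and> root_covers S P j \<eta>2" by blast
  qed
qed

end

theorem proposition2p4:
  fixes R S :: "'a::euclidean_space set" and \<eta>1 \<eta>2 j :: 'a
  assumes "root_system R" and "reduced_root_system R" and "irreducible_root_system R"
    and "root_base R S"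
    and "\<eta>1 \<in> pos_roots R S" and "\<eta>2 \<in> pos_roots R S"
    and "is_root_join S (pos_roots R S) \<eta>1 \<eta>2 j"
  shows "(root_covers S (pos_roots R S) j \<eta>1 \<and> root_covers S (pos_roots R S) j \<eta>2 \<longrightarrow>
           (\<exists>\<alpha>\<in>S. \<exists>\<beta>\<in>S. dynkin_adjacent \<alpha> \<beta> \<and> j = \<alpha> + \<beta> \<and> j = \<eta>1 + \<eta>2) \<or>
           (\<exists>\<nu>. is_root_meet S (pos_roots R S) \<eta>1 \<eta>2 \<nu> \<and>
                 root_covers S (pos_roots R S) \<eta>1 \<nu> \<and> root_covers S (pos_roots R S) \<eta>2 \<nu>))
       \<and> ((\<exists>\<nu>. is_root_meet S (pos_roots R S) \<eta>1 \<eta>2 \<nu> \<and>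
                 root_covers S (pos_roots R S) \<eta>1 \<nu> \<and> root_covers S (pos_roots R S) \<eta>2 \<nu>) \<longrightarrow>
           root_covers S (pos_roots R S) j \<eta>1 \<and> root_covers S (pos_roots R S) j \<eta>2)"
proof -
  interpret rb R S using assms(1,4) by unfold_locales
  show ?thesis using partI_lem[OF assms(5,6,7)] partII_lem[OF assms(5,6,7)] by (rule conjI)
qed

end
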